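(* Let $r\ge2$ and let $n_{kj}$ ($1\le j<k\le r$) be nonnegative integers, with $p_k=\sum_{j<k}n_{kj}$ and $q_j=\sum_{k>j}n_{kj}$. The following are equivalent: (i) there exists $m\in\{0,1\}$ such that $\frac{\pi}{4}\sum_{1\le j<k\le r}\varepsilon_j\delta_kn_{kj}\equiv m\pi\pmod{2\pi}$ for all $\boldsymbol{\varepsilon},\boldsymbol{\delta}\in\{1,-1\}^r$; (ii) every $n_{kj}$ is even, and every $p_k$ and every $q_j$ is divisible by $4$.
   Context: Here $\boldsymbol{\varepsilon}=(\varepsilon_1,\dots,\varepsilon_r)$ and $\boldsymbol{\delta}=(\delta_1,\dots,\delta_r)$ range over $\{1,-1\}^r$. (In the paper, $n_{kj}=\dim V_{kj}$ are the structure constants of a homogeneous cone, but the statement is purely arithmetic.) *)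

theory Defs
  imports Complex_Main
begin

definition real_cong :: "real \<Rightarrow> real \<Rightarrow> real \<Rightarrow> bool" where
  "real_cong x y c \<longleftrightarrow> (\<exists>t::int. x - y = of_int t * c)"

definition sign_vec :: "nat \<Rightarrow> (nat \<Rightarrow> int) \<Rightarrow> bool" where
  "sign_vec r e \<longleftrightarrow> (\<forall>i\<in>{1..r}. e i = 1 \<or> e i = -1)"

end

theory Submission
  imports Defs
begin

lemma swap_tri:
  fixes f :: "nat \<Rightarrow> nat \<Rightarrow> 'a::comm_monoid_add"
  shows "(\<Sum>k\<in>{1..r}. \<Sum>j\<in>{1..<k}. f k j) = (\<Sum>j\<in>{1..r}. \<Sum>k\<in>{j<..r}. f k j)"
proof -
  have "(\<Sum>k\<in>{1..r}. \<Sum>j\<in>{1..<k}. f k j) = (\<Sum>k\<in>{1..r}. \<Sum>j\<in>{j\<in>{1..r}. j<k}. f k j)"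
  proof (rule sum.cong[OF refl])
    fix k assume "k \<in> {1..r}"
    then have "{1..<k} = {j\<in>{1..r}. j<k}" by auto
    then show "(\<Sum>j\<in>{1..<k}. f k j) = (\<Sum>j\<in>{j\<in>{1..r}. j<k}. f k j)" by simp
  qed
  also have "\<dots> = (\<Sum>j\<in>{1..r}. \<Sum>k\<in>{k\<in>{1..r}. j<k}. f k j)"
    by (rule sum.swap_restrict) auto
  also have "\<dots> = (\<Sum>j\<in>{1..r}. \<Sum>k\<in>{j<..r}. f k j)"
  proof (rule sum.cong[OF refl])
    fix j assume "j \<in> {1..r}"
    then have "{k\<in>{1..r}. j<k} = {j<..r}" by auto
    then show "(\<Sum>k\<in>{k\<in>{1..r}. j<k}. f k j) = (\<Sum>k\<in>{j<..r}. f k j)" by simp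
  qed
  finally show ?thesis .
qed

lemma rc:
  "real_cong (pi/4 * real_of_int x) (real m * pi) (2*pi) \<longleftrightarrow> (\<exists>t::int. x = 4*int m + 8*t)"
proof -
  have key: "(pi/4 * real_of_int x - real m * pi = real_of_int t * (2*pi)) \<longleftrightarrow> x = 4*int m + 8*t" for t :: int
  proof -
    have "pi/4 * real_of_int x - real m * pi - real_of_int t * (2*pi)
          = pi/4 * real_of_int (x - 4*int m - 8*t)" by (simp add: algebra_simps)
    then have "(pi/4 * real_of_int x - real m * pi = real_of_int t * (2*pi))
        \<longleftrightarrow> pi/4 * real_of_int (x - 4*int m - 8*t) = 0" by linarith
    also have "\<dots> \<longleftrightarrow> x - 4*int m - 8*t = 0"
      by (simp only: mult_eq_0_iff of_int_eq_0_iff) simp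
    finally show ?thesis by linarith
  qed
  show ?thesis unfolding real_cong_def using key by blast
qed

lemma decomp:
  fixes e d :: "nat \<Rightarrow> int" and n :: "nat \<Rightarrow> nat \<Rightarrow> nat"
  shows "(\<Sum>k\<in>{1..r}. \<Sum>j\<in>{1..<k}. e j * d k * int (n k j))
     = (\<Sum>k\<in>{1..r}. \<Sum>j\<in>{1..<k}. int (n k j))
       - (\<Sum>j\<in>{1..r}. (1 - e j) * int (\<Sum>k\<in>{j<..r}. n k j))
       - (\<Sum>k\<in>{1..r}. (1 - d k) * int (\<Sum>j\<in>{1..<k}. n k j))
       + (\<Sum>k\<in>{1..r}. \<Sum>j\<in>{1..<k}. (1 - e j) * (1 - d k) * int (n k j))"
proof -
  have A: "(\<Sum>j\<in>{1..r}. (1 - e j) * int (\<Sum>k\<in>{j<..r}. n k j))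
      = (\<Sum>k\<in>{1..r}. \<Sum>j\<in>{1..<k}. (1 - e j) * int (n k j))"
    unfolding swap_tri[where f="\<lambda>k j. (1 - e j) * int (n k j)"]
    by (simp add: sum_distrib_left)
  have B: "(\<Sum>k\<in>{1..r}. (1 - d k) * int (\<Sum>j\<in>{1..<k}. n k j))
      = (\<Sum>k\<in>{1..r}. \<Sum>j\<in>{1..<k}. (1 - d k) * int (n k j))"
    by (simp add: sum_distrib_left)
  have "e j * d k * int (n k j) = int (n k j) - (1 - e j) * int (n k j) - (1 - d k) * int (n k j)
        + (1 - e j) * (1 - d k) * int (n k j)" for j k
    by (simp add: algebra_simps)
  then show ?thesis unfolding A B by (simp add: sum.distrib sum_subtractf)
qed

lemma delta1:
  fixes g :: "nat \<Rightarrow> int"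
  assumes "finite A" "j0 \<in> A"
  shows "(\<Sum>j\<in>A. (1 - (if j = j0 then -1 else 1)) * g j) = 2 * g j0"
proof -
  have "(\<Sum>j\<in>A. (1 - (if j = j0 then -1 else 1)) * g j) = (\<Sum>j\<in>A. if j = j0 then 2 * g j else 0)"
    by (rule sum.cong) auto
  also have "\<dots> = 2 * g j0" using assms by (simp add: sum.delta)
  finally show ?thesis .
qed

lemma delta2:
  fixes n :: "nat \<Rightarrow> nat \<Rightarrow> nat"
  assumes "1 \<le> j0" "j0 < k0" "k0 \<le> r"
  shows "(\<Sum>k\<in>{1..r}. \<Sum>j\<in>{1..<k}. (1 - (if j = j0 then -1 else 1)) * (1 - (if k = k0 then -1 else 1)) * int (n k j))
     = 4 * int (n k0 j0)"
proof -
  have "(\<Sum>k\<in>{1..r}. \<Sum>j\<in>{1..<k}. (1 - (if j = j0 then -1 else 1)) * (1 - (if k = k0 then -1 else 1)) * int (n k j))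
     = (\<Sum>k\<in>{1..r}. \<Sum>j\<in>{1..<k}. if k = k0 \<and> j = j0 then 4 * int (n k j) else 0)"
    by (rule sum.cong[OF refl]) (rule sum.cong[OF refl], auto)
  also have "\<dots> = (\<Sum>k\<in>{1..r}. if k = k0 then 4 * int (n k0 j0) else 0)"
  proof (rule sum.cong[OF refl])
    fix k assume "k \<in> {1..r}"
    show "(\<Sum>j\<in>{1..<k}. if k = k0 \<and> j = j0 then 4 * int (n k j) else 0) = (if k = k0 then 4 * int (n k0 j0) else 0)"
    proof (cases "k = k0")
      case True
      then show ?thesis using assms by (simp add: sum.delta)
    qed simp
  qed
  also have "\<dots> = 4 * int (n k0 j0)" using assms by (simp add: sum.delta)
  finally show ?thesis .
qed

theorem mainTheorem8:
  fixes r :: nat and n :: "nat \<Rightarrow> nat \<Rightarrow> nat"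
  assumes "r \<ge> 2"
  shows "(\<exists>m\<in>{0::nat, 1}. \<forall>\<epsilon> \<delta>. sign_vec r \<epsilon> \<longrightarrow> sign_vec r \<delta> \<longrightarrow>
            real_cong ((pi / 4) * (\<Sum>k\<in>{1..r}. \<Sum>j\<in>{1..<k}. real_of_int (\<epsilon> j * \<delta> k) * real (n k j)))
                      (real m * pi) (2 * pi))
       \<longleftrightarrow> ((\<forall>k j. 1 \<le> j \<and> j < k \<and> k \<le> r \<longrightarrow> even (n k j)) \<and>
            (\<forall>k\<in>{1..r}. (4::nat) dvd (\<Sum>j\<in>{1..<k}. n k j)) \<and>
            (\<forall>j\<in>{1..r}. (4::nat) dvd (\<Sum>k\<in>{j<..r}. n k j)))"
proof -
  define S where "S e d = (\<Sum>k\<in>{1..r}. \<Sum>j\<in>{1..<k}. e j * d k * int (n k j))" for e d :: "nat \<Rightarrow> int"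
  define N where "N = (\<Sum>k\<in>{1..r}. \<Sum>j\<in>{1..<k}. int (n k j))"
  define P where "P k = int (\<Sum>j\<in>{1..<k}. n k j)" for k
  define Q where "Q j = int (\<Sum>k\<in>{j<..r}. n k j)" for j
  define T where "T e d = (\<Sum>k\<in>{1..r}. \<Sum>j\<in>{1..<k}. (1 - e j) * (1 - d k) * int (n k j))" for e d :: "nat \<Rightarrow> int"
  have dec: "S e d = N - (\<Sum>j\<in>{1..r}. (1 - e j) * Q j) - (\<Sum>k\<in>{1..r}. (1 - d k) * P k) + T e d" for e d
    unfolding S_def N_def P_def Q_def T_def by (rule decomp)
  have conv: "real_cong ((pi / 4) * (\<Sum>k\<in>{1..r}. \<Sum>j\<in>{1..<k}. real_of_int (e j * d k) * real (n k j)))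
                      (real m * pi) (2 * pi) \<longleftrightarrow> (\<exists>t::int. S e d = 4*int m + 8*t)" for e d m
  proof -
    have "(\<Sum>k\<in>{1..r}. \<Sum>j\<in>{1..<k}. real_of_int (e j * d k) * real (n k j)) = real_of_int (S e d)"
      unfolding S_def by (simp add: of_int_sum)
    then show ?thesis using rc by simp
  qed
  let ?one = "\<lambda>_::nat. 1::int"
  have S11: "S ?one ?one = N" unfolding S_def N_def by simp
  show ?thesis
  proof
    assume "\<exists>m\<in>{0::nat, 1}. \<forall>\<epsilon> \<delta>. sign_vec r \<epsilon> \<longrightarrow> sign_vec r \<delta> \<longrightarrow>
            real_cong ((pi / 4) * (\<Sum>k\<in>{1..r}. \<Sum>j\<in>{1..<k}. real_of_int (\<epsilon> j * \<delta> k) * real (n k j)))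
                      (real m * pi) (2 * pi)"
    then obtain m where H: "\<And>e d. sign_vec r e \<Longrightarrow> sign_vec r d \<Longrightarrow> \<exists>t::int. S e d = 4*int m + 8*t"
      using conv by blast
    have sv1: "sign_vec r ?one" unfolding sign_vec_def by simp
    have svf: "sign_vec r (\<lambda>i. if i = a then -1 else 1)" for a unfolding sign_vec_def by simp
    have E: "8 dvd (N - S e d)" if se: "sign_vec r e" and sd: "sign_vec r d" for e d
    proof -
      obtain t where "S e d = 4*int m + 8*t" using H[OF se sd] by blast
      moreover obtain t0 where "S ?one ?one = 4*int m + 8*t0" using H sv1 by blast
      ultimately show ?thesis using S11 by presburger
    qed
    have Qd: "4 dvd Q j" if "j \<in> {1..r}" for j
    proof -
      let ?e = "\<lambda>i. if i = j then -1 else (1::int)"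
      have "S ?e ?one = N - 2 * Q j" using dec[of ?e ?one] delta1[of "{1..r}" j Q] that
        by (simp add: T_def)
      with E[OF svf[of j] sv1] show ?thesis by presburger
    qed
    have Pd: "4 dvd P k" if "k \<in> {1..r}" for k
    proof -
      let ?d = "\<lambda>i. if i = k then -1 else (1::int)"
      have "S ?one ?d = N - 2 * P k" using dec[of ?one ?d] delta1[of "{1..r}" k P] that
        by (simp add: T_def)
      with E[OF sv1 svf[of k]] show ?thesis by presburger
    qed
    have nd: "even (n k j)" if "1 \<le> j" "j < k" "k \<le> r" for k j
    proof -
      let ?e = "\<lambda>i. if i = j then -1 else (1::int)"
      let ?d = "\<lambda>i. if i = k then -1 else (1::int)"
      have "S ?e ?d = N - 2 * Q j - 2 * P k + 4 * int (n k j)"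
        using dec[of ?e ?d] delta1[of "{1..r}" j Q] delta1[of "{1..r}" k P] delta2[OF that, of n] that
        by (simp add: T_def)
      with E[OF svf[of j] svf[of k]] Qd[of j] Pd[of k] that have "even (int (n k j))" by auto presburger
      then show ?thesis by simp
    qed
    show "(\<forall>k j. 1 \<le> j \<and> j < k \<and> k \<le> r \<longrightarrow> even (n k j)) \<and>
            (\<forall>k\<in>{1..r}. (4::nat) dvd (\<Sum>j\<in>{1..<k}. n k j)) \<and>
            (\<forall>j\<in>{1..r}. (4::nat) dvd (\<Sum>k\<in>{j<..r}. n k j))"
      using nd Pd Qd unfolding P_def Q_def by (metis int_dvd_int_iff of_nat_numeral)
  next
    assume R: "(\<forall>k j. 1 \<le> j \<and> j < k \<and> k \<le> r \<longrightarrow> even (n k j)) \<and>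
            (\<forall>k\<in>{1..r}. (4::nat) dvd (\<Sum>j\<in>{1..<k}. n k j)) \<and>
            (\<forall>j\<in>{1..r}. (4::nat) dvd (\<Sum>k\<in>{j<..r}. n k j))"
    have nd: "even (int (n k j))" if "k \<in> {1..r}" "j \<in> {1..<k}" for k j using R that by auto
    have Pd: "4 dvd P k" if "k \<in> {1..r}" for k using R that unfolding P_def
      by (metis int_dvd_int_iff of_nat_numeral)
    have Qd: "4 dvd Q j" if "j \<in> {1..r}" for j using R that unfolding Q_def
      by (metis int_dvd_int_iff of_nat_numeral)
    have N4: "4 dvd N"
    proof -
      have "N = (\<Sum>k\<in>{1..r}. P k)" unfolding N_def P_def by (simp add: of_nat_sum)
      then show ?thesis using Pd by (metis dvd_sum)
    qed
    have E: "8 dvd (S e d - N)" if se: "sign_vec r e" and sd: "sign_vec r d" for e d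
    proof -
      have 1: "8 dvd (\<Sum>j\<in>{1..r}. (1 - e j) * Q j)"
      proof (rule dvd_sum)
        fix j assume j: "j \<in> {1..r}"
        then have "e j = 1 \<or> e j = -1" using se unfolding sign_vec_def by auto
        then show "8 dvd (1 - e j) * Q j" using Qd[OF j] by auto
      qed
      have 2: "8 dvd (\<Sum>k\<in>{1..r}. (1 - d k) * P k)"
      proof (rule dvd_sum)
        fix k assume k: "k \<in> {1..r}"
        then have "d k = 1 \<or> d k = -1" using sd unfolding sign_vec_def by auto
        then show "8 dvd (1 - d k) * P k" using Pd[OF k] by auto
      qed
      have 3: "8 dvd T e d" unfolding T_def
      proof (intro dvd_sum)
        fix k j assume k: "k \<in> {1..r}" and j: "j \<in> {1..<k}"
        then have "e j = 1 \<or> e j = -1" "d k = 1 \<or> d k = -1" using se sd unfolding sign_vec_def by auto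
        then show "8 dvd (1 - e j) * (1 - d k) * int (n k j)" using nd[OF k j] by auto
      qed
      show ?thesis using dec[of e d] 1 2 3 by presburger
    qed
    define m :: nat where "m = (if 8 dvd N then 0 else 1)"
    have "\<forall>e d. sign_vec r e \<longrightarrow> sign_vec r d \<longrightarrow> (\<exists>t::int. S e d = 4*int m + 8*t)"
    proof (intro allI impI)
      fix e d assume "sign_vec r e" "sign_vec r d"
      from E[OF this] N4 show "\<exists>t::int. S e d = 4*int m + 8*t" unfolding m_def by presburger
    qed
    then show "\<exists>m\<in>{0::nat, 1}. \<forall>\<epsilon> \<delta>. sign_vec r \<epsilon> \<longrightarrow> sign_vec r \<delta> \<longrightarrow>
            real_cong ((pi / 4) * (\<Sum>k\<in>{1..r}. \<Sum>j\<in>{1..<k}. real_of_int (\<epsilon> j * \<delta> k) * real (n k j)))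
                      (real m * pi) (2 * pi)"
      using conv unfolding m_def by (intro bexI[of _ m]) (auto simp: m_def)
  qed
qed

end
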